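(* Let $R$ be a commutative ring with ${\rm char}(R)\neq 2$ and $R_2\neq\{0\}$, let $G$ be a group with involution $\varphi$, and assume $(RG)^-_\varphi$ is commutative. Let $g,h\in G$ with $(g,h)\neq 1$. \begin{enumerate} \item If $g\in G_\varphi$ and $h\notin G_\varphi$, then $gh=\varphi(h)g$ and $hg=g\varphi(h)$. \item If $g,h\in G\setminus G_\varphi$, then $gh\notin G_\varphi$. \item If $g,h\in G\setminus G_\varphi$, then ${\rm char}(R)=4$, the subgroup $\langle g,h\rangle$ has the LC-property and has a unique non-trivial commutator, and $\varphi(g)=(g,h)g$ and $\varphi(h)=(g,h)h$. In particular, if ${\rm char}(R)\neq 4$ then $K=\langle x\in G\mid x\notin G_\varphi\rangle$ is abelian. \end{enumerate}
   Context: An involution on a group $G$ is a map $\varphi:G\to G$ with $\varphi(gh)=\varphi(h)\varphi(g)$ and $\varphi^2=\mathrm{id}$, extended $R$-linearly to $RG$. $G_\varphi=\{g\in G\mid\varphi(g)=g\}$; $(RG)^-_\varphi=\{\alpha\in RG\mid\varphi(\alpha)=-\alpha\}$; $R_2=\{r\in R\mid 2r=0\}$. The group commutator is $(g,h)=ghg^{-1}h^{-1}$. A group $H$ has the LC (lack of commutativity) property if for all $a,b\in H$: $ab=ba$ if and only if $a\in Z(H)$ or $b\in Z(H)$ or $ab\in Z(H)$. "Unique non-trivial commutator" means the set $\{(a,b)\mid a,b\in H\}$ has exactly one element different from $1$. *)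

theory Defs
  imports "HOL-Algebra.Algebra"
begin

definition group_involution :: "('g, 'b) monoid_scheme \<Rightarrow> ('g \<Rightarrow> 'g) \<Rightarrow> bool" where
  "group_involution G \<phi> \<longleftrightarrow>
     (\<forall>g \<in> carrier G. \<phi> g \<in> carrier G) \<and>
     (\<forall>g \<in> carrier G. \<forall>h \<in> carrier G. \<phi> (g \<otimes>\<^bsub>G\<^esub> h) = \<phi> h \<otimes>\<^bsub>G\<^esub> \<phi> g) \<and>
     (\<forall>g \<in> carrier G. \<phi> (\<phi> g) = g)"

definition group_ring :: "('g, 'b) monoid_scheme \<Rightarrow> ('g \<Rightarrow> 'r::comm_ring_1) set" where
  "group_ring G = {\<alpha>. finite {x. \<alpha> x \<noteq> 0} \<and> {x. \<alpha> x \<noteq> 0} \<subseteq> carrier G}"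

definition gr_mult :: "('g, 'b) monoid_scheme \<Rightarrow> ('g \<Rightarrow> 'r::comm_ring_1) \<Rightarrow> ('g \<Rightarrow> 'r) \<Rightarrow> ('g \<Rightarrow> 'r)" where
  "gr_mult G \<alpha> \<beta> = (\<lambda>x. \<Sum>(y, z) \<in> {(y, z). y \<in> carrier G \<and> z \<in> carrier G \<and> \<alpha> y \<noteq> 0 \<and> \<beta> z \<noteq> 0
                                        \<and> y \<otimes>\<^bsub>G\<^esub> z = x}. \<alpha> y * \<beta> z)"

text \<open>R-linear extension of \<phi> to RG: \<phi>(\<Sum> a_g g) = \<Sum> a_g \<phi>(g), so the coefficient at x is a_{\<phi>(x)}.\<close>
definition gr_inv_ext :: "('g, 'b) monoid_scheme \<Rightarrow> ('g \<Rightarrow> 'g) \<Rightarrow> ('g \<Rightarrow> 'r::comm_ring_1) \<Rightarrow> ('g \<Rightarrow> 'r)" where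
  "gr_inv_ext G \<phi> \<alpha> = (\<lambda>x. if x \<in> carrier G then \<alpha> (\<phi> x) else 0)"

definition gr_skew :: "('g, 'b) monoid_scheme \<Rightarrow> ('g \<Rightarrow> 'g) \<Rightarrow> ('g \<Rightarrow> 'r::comm_ring_1) set" where
  "gr_skew G \<phi> = {\<alpha> \<in> group_ring G. gr_inv_ext G \<phi> \<alpha> = (\<lambda>x. - \<alpha> x)}"

definition fixed_elems :: "('g, 'b) monoid_scheme \<Rightarrow> ('g \<Rightarrow> 'g) \<Rightarrow> 'g set" where
  "fixed_elems G \<phi> = {g \<in> carrier G. \<phi> g = g}"

definition grp_comm :: "('g, 'b) monoid_scheme \<Rightarrow> 'g \<Rightarrow> 'g \<Rightarrow> 'g" where
  "grp_comm G g h = g \<otimes>\<^bsub>G\<^esub> h \<otimes>\<^bsub>G\<^esub> inv\<^bsub>G\<^esub> g \<otimes>\<^bsub>G\<^esub> inv\<^bsub>G\<^esub> h"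

definition sub_center :: "('g, 'b) monoid_scheme \<Rightarrow> 'g set \<Rightarrow> 'g set" where
  "sub_center G H = {z \<in> H. \<forall>x \<in> H. z \<otimes>\<^bsub>G\<^esub> x = x \<otimes>\<^bsub>G\<^esub> z}"

definition LC_property :: "('g, 'b) monoid_scheme \<Rightarrow> 'g set \<Rightarrow> bool" where
  "LC_property G H \<longleftrightarrow> (\<forall>a \<in> H. \<forall>b \<in> H.
      a \<otimes>\<^bsub>G\<^esub> b = b \<otimes>\<^bsub>G\<^esub> a \<longleftrightarrow>
      (a \<in> sub_center G H \<or> b \<in> sub_center G H \<or> a \<otimes>\<^bsub>G\<^esub> b \<in> sub_center G H))"

definition unique_nontrivial_commutator :: "('g, 'b) monoid_scheme \<Rightarrow> 'g set \<Rightarrow> bool" where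
  "unique_nontrivial_commutator G H \<longleftrightarrow>
     (\<exists>!c. c \<in> {grp_comm G a b | a b. a \<in> H \<and> b \<in> H} \<and> c \<noteq> \<one>\<^bsub>G\<^esub>)"

end

theory Submission
  imports Defs
begin


lemma gr_mult_expand:
  fixes \<alpha> \<beta> :: "'g \<Rightarrow> 'r::comm_ring_1"
  assumes "finite A" "A \<subseteq> carrier G" "finite B" "B \<subseteq> carrier G"
    "\<And>x. \<alpha> x \<noteq> 0 \<Longrightarrow> x \<in> A" "\<And>x. \<beta> x \<noteq> 0 \<Longrightarrow> x \<in> B"
  shows "gr_mult G \<alpha> \<beta> x = (\<Sum>y\<in>A. \<Sum>z\<in>B. if y \<otimes>\<^bsub>G\<^esub> z = x then \<alpha> y * \<beta> z else 0)"
proof -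
  let ?S = "{(y, z). y \<in> carrier G \<and> z \<in> carrier G \<and> \<alpha> y \<noteq> 0 \<and> \<beta> z \<noteq> 0 \<and> y \<otimes>\<^bsub>G\<^esub> z = x}"
  have sub: "?S \<subseteq> A \<times> B" using assms by auto
  have "gr_mult G \<alpha> \<beta> x = (\<Sum>(y,z)\<in>?S. \<alpha> y * \<beta> z)" by (simp add: gr_mult_def)
  also have "\<dots> = (\<Sum>(y,z)\<in>?S. if y \<otimes>\<^bsub>G\<^esub> z = x then \<alpha> y * \<beta> z else 0)"
    by (rule sum.cong) auto
  also have "\<dots> = (\<Sum>(y,z)\<in>A \<times> B. if y \<otimes>\<^bsub>G\<^esub> z = x then \<alpha> y * \<beta> z else 0)"
    apply (rule sum.mono_neutral_left)
    using assms sub by (auto split: if_splits)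
  also have "\<dots> = (\<Sum>y\<in>A. \<Sum>z\<in>B. if y \<otimes>\<^bsub>G\<^esub> z = x then \<alpha> y * \<beta> z else 0)"
    by (simp add: sum.cartesian_product)
  finally show ?thesis .
qed

lemma inv_basic:
  assumes "group_involution G \<phi>" "x \<in> carrier G" "y \<in> carrier G"
  shows "\<phi> x \<in> carrier G" "\<phi> (\<phi> x) = x" "\<phi> (x \<otimes>\<^bsub>G\<^esub> y) = \<phi> y \<otimes>\<^bsub>G\<^esub> \<phi> x"
    "(\<phi> x = \<phi> y) = (x = y)"
  using assms unfolding group_involution_def by metis+

lemma skew_diff:
  assumes "group_involution G \<phi>" "p \<in> carrier G"
  shows "(\<lambda>x. (if x = p then 1 else 0) - (if x = \<phi> p then 1 else 0) :: 'r::comm_ring_1) \<in> gr_skew G \<phi>"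
proof -
  have pc: "\<phi> p \<in> carrier G" using assms unfolding group_involution_def by auto
  have gr: "(\<lambda>x. (if x = p then 1 else 0) - (if x = \<phi> p then 1 else 0) :: 'r) \<in> group_ring G"
    unfolding group_ring_def
    by (rule CollectI, rule conjI, rule finite_subset[of _ "{p, \<phi> p}"]) (use assms pc in \<open>auto split: if_splits\<close>)
  have "\<And>x. x \<in> carrier G \<Longrightarrow> (\<phi> x = p) = (x = \<phi> p)" "\<And>x. x \<in> carrier G \<Longrightarrow> (\<phi> x = \<phi> p) = (x = p)"
    using assms unfolding group_involution_def by metis+
  then show ?thesis using gr pc assms(2) unfolding gr_skew_def gr_inv_ext_def
    by (auto intro!: ext)
qed

lemma skew_pt:
  assumes "group_involution G \<phi>" "p \<in> carrier G" "\<phi> p = p" "2 * r = (0::'r::comm_ring_1)"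
  shows "(\<lambda>x. if x = p then r else 0) \<in> gr_skew G \<phi>"
proof -
  have gr: "(\<lambda>x. if x = p then r else 0) \<in> group_ring G"
    unfolding group_ring_def
    by (rule CollectI, rule conjI, rule finite_subset[of _ "{p}"]) (use assms in \<open>auto split: if_splits\<close>)
  have rr: "- r = r" using assms(4) by (metis add_eq_0_iff mult_2)
  have "\<And>x. x \<in> carrier G \<Longrightarrow> (\<phi> x = p) = (x = p)"
    using assms unfolding group_involution_def by metis
  then show ?thesis using gr rr assms(2) unfolding gr_skew_def gr_inv_ext_def
    by (auto intro!: ext)
qed



context group begin

lemma part1:
  fixes r :: "'r::comm_ring_1"
  assumes inv: "group_involution G \<phi>"
  and comm: "\<forall>\<alpha>\<in>(gr_skew G \<phi> :: ('a \<Rightarrow> 'r) set). \<forall>\<beta>\<in>gr_skew G \<phi>. gr_mult G \<alpha> \<beta> = gr_mult G \<beta> \<alpha>"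
  and r: "r \<noteq> 0" "2*r = 0"
  and g: "g \<in> carrier G" "\<phi> g = g" and h: "h \<in> carrier G" "\<phi> h \<noteq> h" and gh: "g \<otimes> h \<noteq> h \<otimes> g"
  shows "g \<otimes> h = \<phi> h \<otimes> g \<and> h \<otimes> g = g \<otimes> \<phi> h"
proof -
  define \<alpha> :: "'a \<Rightarrow> 'r" where "\<alpha> = (\<lambda>x. if x = g then r else 0)"
  define \<beta> :: "'a \<Rightarrow> 'r" where "\<beta> = (\<lambda>x. (if x = h then 1 else 0) - (if x = \<phi> h then 1 else 0))"
  have h': "\<phi> h \<in> carrier G" using inv h unfolding group_involution_def by auto
  have "\<alpha> \<in> gr_skew G \<phi>" unfolding \<alpha>_def by (rule skew_pt[OF inv g r(2)])
  moreover have "\<beta> \<in> gr_skew G \<phi>" unfolding \<beta>_def by (rule skew_diff[OF inv h(1)])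
  ultimately have E: "gr_mult G \<alpha> \<beta> x = gr_mult G \<beta> \<alpha> x" for x using comm by metis
  have rr: "- r = r" using r(2) by (metis add_eq_0_iff mult_2)
  have ex1: "gr_mult G \<alpha> \<beta> x = (if g \<otimes> h = x then r else 0) - (if g \<otimes> \<phi> h = x then r else 0)" for x
    by (subst gr_mult_expand[where A="{g}" and B="{h, \<phi> h}"]) (use g h h' in \<open>auto simp: \<alpha>_def \<beta>_def split: if_splits\<close>)
  have ex2: "gr_mult G \<beta> \<alpha> x = (if h \<otimes> g = x then r else 0) - (if \<phi> h \<otimes> g = x then r else 0)" for x
    by (subst gr_mult_expand[where B="{g}" and A="{h, \<phi> h}"]) (use g h h' in \<open>auto simp: \<alpha>_def \<beta>_def split: if_splits\<close>)
  have "g \<otimes> \<phi> h \<noteq> g \<otimes> h" using g h h' by simp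
  then have 1: "g \<otimes> h = \<phi> h \<otimes> g"
    using E[of "g \<otimes> h"] ex1[of "g \<otimes> h"] ex2[of "g \<otimes> h"] gh r rr by (auto split: if_splits)
  have "\<phi> h \<otimes> g \<noteq> h \<otimes> g" using g h h' by simp
  then have 2: "h \<otimes> g = g \<otimes> \<phi> h"
    using E[of "h \<otimes> g"] ex1[of "h \<otimes> g"] ex2[of "h \<otimes> g"] gh r rr by (auto split: if_splits)
  show ?thesis using 1 2 by simp
qed

lemma part2:
  fixes r :: "'r::comm_ring_1"
  assumes inv: "group_involution G \<phi>"
  and comm: "\<forall>\<alpha>\<in>(gr_skew G \<phi> :: ('a \<Rightarrow> 'r) set). \<forall>\<beta>\<in>gr_skew G \<phi>. gr_mult G \<alpha> \<beta> = gr_mult G \<beta> \<alpha>"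
  and r: "r \<noteq> 0" "2*r = 0"
  and g: "g \<in> carrier G" "\<phi> g \<noteq> g" and h: "h \<in> carrier G" "\<phi> h \<noteq> h" and gh: "g \<otimes> h \<noteq> h \<otimes> g"
  shows "\<phi> (g \<otimes> h) \<noteq> g \<otimes> h"
proof
  assume fx: "\<phi> (g \<otimes> h) = g \<otimes> h"
  let ?k = "g \<otimes> h"
  have k: "?k \<in> carrier G" using g h by simp
  define \<alpha> :: "'a \<Rightarrow> 'r" where "\<alpha> = (\<lambda>x. if x = ?k then r else 0)"
  define \<beta> :: "'a \<Rightarrow> 'r" where "\<beta> = (\<lambda>x. (if x = g then 1 else 0) - (if x = \<phi> g then 1 else 0))"
  have g': "\<phi> g \<in> carrier G" using inv g unfolding group_involution_def by auto
  have h': "\<phi> h \<in> carrier G" using inv h unfolding group_involution_def by auto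
  have "\<alpha> \<in> gr_skew G \<phi>" unfolding \<alpha>_def by (rule skew_pt[OF inv k fx r(2)])
  moreover have "\<beta> \<in> gr_skew G \<phi>" unfolding \<beta>_def by (rule skew_diff[OF inv g(1)])
  ultimately have E: "gr_mult G \<alpha> \<beta> x = gr_mult G \<beta> \<alpha> x" for x using comm by metis
  have rr: "- r = r" using r(2) by (metis add_eq_0_iff mult_2)
  have ex1: "gr_mult G \<alpha> \<beta> x = (if ?k \<otimes> g = x then r else 0) - (if ?k \<otimes> \<phi> g = x then r else 0)" for x
    by (subst gr_mult_expand[where A="{?k}" and B="{g, \<phi> g}"]) (use g g' k in \<open>auto simp: \<alpha>_def \<beta>_def split: if_splits\<close>)
  have ex2: "gr_mult G \<beta> \<alpha> x = (if g \<otimes> ?k = x then r else 0) - (if \<phi> g \<otimes> ?k = x then r else 0)" for x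
    by (subst gr_mult_expand[where B="{?k}" and A="{g, \<phi> g}"]) (use g g' k in \<open>auto simp: \<alpha>_def \<beta>_def split: if_splits\<close>)
  have a: "?k \<otimes> g \<noteq> g \<otimes> ?k" using g h gh by (simp add: m_assoc)
  have b: "\<phi> g \<otimes> ?k \<noteq> g \<otimes> ?k" using g h g' by simp
  have "?k \<otimes> \<phi> g = g \<otimes> ?k"
    using E[of "g \<otimes> ?k"] ex1[of "g \<otimes> ?k"] ex2[of "g \<otimes> ?k"] a b r rr by (auto split: if_splits)
  then have "h \<otimes> \<phi> g = g \<otimes> h" using g h g' by (simp add: m_assoc)
  moreover have "\<phi> h \<otimes> \<phi> g = g \<otimes> h" using fx inv_basic(3)[OF inv g(1) h(1)] by simp
  ultimately have "\<phi> h \<otimes> \<phi> g = h \<otimes> \<phi> g" by simp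
  then show False using h h' g' by simp
qed

end


context group begin

lemma part3:
  fixes r :: "'r::comm_ring_1"
  assumes inv: "group_involution G \<phi>"
  and comm: "\<forall>\<alpha>\<in>(gr_skew G \<phi> :: ('a \<Rightarrow> 'r) set). \<forall>\<beta>\<in>gr_skew G \<phi>. gr_mult G \<alpha> \<beta> = gr_mult G \<beta> \<alpha>"
  and r: "r \<noteq> 0" "2*r = 0" and two: "(2::'r) \<noteq> 0" and three: "(3::'r) \<noteq> 0"
  and g: "g \<in> carrier G" "\<phi> g \<noteq> g" and h: "h \<in> carrier G" "\<phi> h \<noteq> h" and gh: "g \<otimes> h \<noteq> h \<otimes> g"
  shows "\<phi> g \<otimes> \<phi> h = g \<otimes> h \<and> h \<otimes> \<phi> g = g \<otimes> h \<and> \<phi> h \<otimes> g = g \<otimes> h \<and> (4::'r) = 0"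
proof -
  have g': "\<phi> g \<in> carrier G" using inv g unfolding group_involution_def by auto
  have h': "\<phi> h \<in> carrier G" using inv h unfolding group_involution_def by auto
  define \<alpha> :: "'a \<Rightarrow> 'r" where "\<alpha> = (\<lambda>x. (if x = g then 1 else 0) - (if x = \<phi> g then 1 else 0))"
  define \<beta> :: "'a \<Rightarrow> 'r" where "\<beta> = (\<lambda>x. (if x = h then 1 else 0) - (if x = \<phi> h then 1 else 0))"
  have "\<alpha> \<in> gr_skew G \<phi>" unfolding \<alpha>_def by (rule skew_diff[OF inv g(1)])
  moreover have "\<beta> \<in> gr_skew G \<phi>" unfolding \<beta>_def by (rule skew_diff[OF inv h(1)])
  ultimately have E: "gr_mult G \<alpha> \<beta> x = gr_mult G \<beta> \<alpha> x" for x using comm by metis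
  have ex1: "gr_mult G \<alpha> \<beta> x = (if g \<otimes> h = x then 1 else 0) - (if g \<otimes> \<phi> h = x then 1 else 0)
     - (if \<phi> g \<otimes> h = x then 1 else 0) + (if \<phi> g \<otimes> \<phi> h = x then 1 else 0)" for x
    by (subst gr_mult_expand[where A="{g, \<phi> g}" and B="{h, \<phi> h}"]) (use g h h' g' in \<open>auto simp: \<alpha>_def \<beta>_def split: if_splits\<close>)
  have ex2: "gr_mult G \<beta> \<alpha> x = (if h \<otimes> g = x then 1 else 0) - (if h \<otimes> \<phi> g = x then 1 else 0)
     - (if \<phi> h \<otimes> g = x then 1 else 0) + (if \<phi> h \<otimes> \<phi> g = x then 1 else 0)" for x
    by (subst gr_mult_expand[where B="{g, \<phi> g}" and A="{h, \<phi> h}"]) (use g h h' g' in \<open>auto simp: \<alpha>_def \<beta>_def split: if_splits\<close>)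
  have n1: "g \<otimes> \<phi> h \<noteq> g \<otimes> h" "\<phi> g \<otimes> h \<noteq> g \<otimes> h" using g h g' h' by simp_all
  have n2: "\<phi> h \<otimes> \<phi> g \<noteq> g \<otimes> h"
    using part2[OF inv comm r g h gh] inv_basic(3)[OF inv g(1) h(1)] by simp
  have eq: "1 + (if \<phi> g \<otimes> \<phi> h = g \<otimes> h then 1 else 0) = 
     - (if h \<otimes> \<phi> g = g \<otimes> h then 1 else 0) - (if \<phi> h \<otimes> g = g \<otimes> h then (1::'r) else 0)"
    using E[of "g \<otimes> h"] ex1[of "g \<otimes> h"] ex2[of "g \<otimes> h"] n1 n2 gh by auto
  have f1: "(1::'r) \<noteq> 0" using r by (metis mult_1 mult_zero_left)
  have f2: "(1::'r) \<noteq> -1" using two by (metis add_eq_0_iff one_add_one)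
  have f3: "(1::'r) \<noteq> -1 - 1" using three
    by (metis (no_types, opaque_lifting) add_eq_0_iff diff_minus_eq_add minus_diff_eq numeral_Bit1 numeral_One one_add_one)
  have f4: "(1::'r) + 1 \<noteq> 0" using two by simp
  have f5: "(1::'r) + 1 \<noteq> - 1" using f3 by (metis add_diff_cancel_right' diff_minus_eq_add minus_diff_eq)
  have f6: "(1::'r) + 1 = -1 - 1 \<Longrightarrow> (4::'r) = 0" by (simp add: algebra_simps)
  show ?thesis
    using eq f1 f2 f3 f4 f5 f6 by (auto split: if_splits)
qed

end


context group begin

lemma inv_commute:
  assumes "x \<in> carrier G" "y \<in> carrier G" "y \<otimes> x = x \<otimes> y"
  shows "y \<otimes> inv x = inv x \<otimes> y"
proof -
  have l: "inv x \<otimes> (y \<otimes> x) \<otimes> inv x = inv x \<otimes> y" using assms(1,2) by (simp add: m_assoc)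
  have r: "inv x \<otimes> (x \<otimes> y) \<otimes> inv x = y \<otimes> inv x" using assms(1,2) by (simp add: m_assoc[symmetric])
  show ?thesis using l r assms(3) by simp
qed

lemma comm_gen:
  assumes "S \<subseteq> carrier G" "y \<in> carrier G" "\<forall>s\<in>S. y \<otimes> s = s \<otimes> y" "x \<in> generate G S"
  shows "y \<otimes> x = x \<otimes> y"
  using assms(4)
proof (induction rule: generate.induct)
  case one then show ?case using assms by simp
next
  case (incl s) then show ?case using assms by auto
next
  case (inv s) then show ?case using assms inv_commute[of s y] by auto
next
  case (eng a b)
  have a: "a \<in> carrier G" and b: "b \<in> carrier G" using eng generate_in_carrier assms(1) by auto
  have "y \<otimes> (a \<otimes> b) = (y \<otimes> a) \<otimes> b" using a b assms by (simp add: m_assoc)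
  also have "\<dots> = a \<otimes> (y \<otimes> b)" using eng a b assms by (simp add: m_assoc)
  also have "\<dots> = (a \<otimes> b) \<otimes> y" using eng a b assms by (simp add: m_assoc)
  finally show ?case .
qed

lemma gen_abelian:
  assumes "S \<subseteq> carrier G" "\<forall>x\<in>S. \<forall>y\<in>S. x \<otimes> y = y \<otimes> x" "a \<in> generate G S" "b \<in> generate G S"
  shows "a \<otimes> b = b \<otimes> a"
proof -
  have "\<forall>s\<in>S. s \<otimes> b = b \<otimes> s" using assms comm_gen[of S _ b] by blast
  then have "\<forall>s\<in>S. b \<otimes> s = s \<otimes> b" by auto
  then have "b \<otimes> a = a \<otimes> b" using comm_gen[of S b a] assms generate_in_carrier by blast
  then show ?thesis by simp
qed

lemma struct:
  assumes g: "g \<in> carrier G" and h: "h \<in> carrier G" and gh: "g \<otimes> h \<noteq> h \<otimes> g"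
  and c: "c \<in> carrier G" and E1: "c \<otimes> g \<otimes> h = h \<otimes> g" and E2: "c \<otimes> h \<otimes> g = g \<otimes> h"
  and E3: "g \<otimes> c \<otimes> h = h \<otimes> g" and E4: "h \<otimes> c \<otimes> g = g \<otimes> h"
  and cH: "c \<in> generate G {g,h}"
  shows "LC_property G (generate G {g,h}) \<and> (\<forall>a\<in>generate G {g,h}. \<forall>b\<in>generate G {g,h}. b \<otimes> a = a \<otimes> b \<or> b \<otimes> a = c \<otimes> (a \<otimes> b))"
proof -
  define H where "H = generate G {g,h}"
  define Z where "Z = sub_center G H"
  define U where "U = {\<one>, g, h, g \<otimes> h}"
  have S: "{g,h} \<subseteq> carrier G" using g h by auto
  have Hc: "x \<in> H \<Longrightarrow> x \<in> carrier G" for x using generate_in_carrier[OF S] H_def by auto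
  have gH: "g \<in> H" and hH: "h \<in> H" unfolding H_def by (auto intro: generate.incl)
  have RW2: "g \<otimes> c = c \<otimes> g"
  proof -
    have "(c \<otimes> g) \<otimes> h = (g \<otimes> c) \<otimes> h" using E1 E3 by simp
    then show ?thesis using g h c r_cancel[of h "c \<otimes> g" "g \<otimes> c"] by simp
  qed
  have RW3: "h \<otimes> c = c \<otimes> h"
  proof -
    have "(c \<otimes> h) \<otimes> g = (h \<otimes> c) \<otimes> g" using E2 E4 by simp
    then show ?thesis using g h c r_cancel[of g "c \<otimes> h" "h \<otimes> c"] by simp
  qed
  have RW1: "h \<otimes> g = c \<otimes> (g \<otimes> h)" using E1 g h c by (simp add: m_assoc)
  have RW4: "c \<otimes> c = \<one>"
  proof -
    have "c \<otimes> c \<otimes> (g \<otimes> h) = \<one> \<otimes> (g \<otimes> h)"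
      using E1 E2 g h c by (simp add: m_assoc)
    then show ?thesis using g h c r_cancel[of "g \<otimes> h" "c \<otimes> c" \<one>] by simp
  qed
  have RW1x: "x \<in> carrier G \<Longrightarrow> h \<otimes> (g \<otimes> x) = c \<otimes> (g \<otimes> (h \<otimes> x))" for x
    using RW1 g h c m_assoc[of h g x] m_assoc[of c "g \<otimes> h" x] m_assoc[of g h x] by simp
  have RW2x: "x \<in> carrier G \<Longrightarrow> g \<otimes> (c \<otimes> x) = c \<otimes> (g \<otimes> x)" for x
    using RW2 g c m_assoc[of g c x] m_assoc[of c g x] by simp
  have RW3x: "x \<in> carrier G \<Longrightarrow> h \<otimes> (c \<otimes> x) = c \<otimes> (h \<otimes> x)" for x
    using RW3 h c m_assoc[of h c x] m_assoc[of c h x] by simp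
  have RW4x: "x \<in> carrier G \<Longrightarrow> c \<otimes> (c \<otimes> x) = x" for x
    using RW4 c m_assoc[of c c x] by simp
  have c1: "c \<noteq> \<one>" using RW1 gh g h by auto
  have cne: "x \<in> carrier G \<Longrightarrow> (c \<otimes> x = x) = False" "x \<in> carrier G \<Longrightarrow> (x = c \<otimes> x) = False" for x
    using c1 c r_cancel[of x c \<one>] by auto
  note RW = RW1 RW1x RW2 RW2x RW3 RW3x RW4 RW4x cne c1
  have inZ: "y \<in> H \<Longrightarrow> y \<otimes> g = g \<otimes> y \<Longrightarrow> y \<otimes> h = h \<otimes> y \<Longrightarrow> y \<in> Z" for y
  proof -
    assume a: "y \<in> H" "y \<otimes> g = g \<otimes> y" "y \<otimes> h = h \<otimes> y"
    have "\<forall>s\<in>{g,h}. y \<otimes> s = s \<otimes> y" using a by blast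
    then have "\<forall>x\<in>H. y \<otimes> x = x \<otimes> y" using comm_gen[OF S, of y] Hc[OF a(1)] unfolding H_def by blast
    then show "y \<in> Z" unfolding Z_def sub_center_def using a(1) by blast
  qed
  have ZH: "z \<in> Z \<Longrightarrow> z \<in> H" for z unfolding Z_def sub_center_def by blast
  have Zc: "z \<in> Z \<Longrightarrow> x \<in> H \<Longrightarrow> z \<otimes> x = x \<otimes> z" for z x unfolding Z_def sub_center_def by blast
  have HM: "x \<in> H \<Longrightarrow> y \<in> H \<Longrightarrow> x \<otimes> y \<in> H" for x y unfolding H_def by (rule generate.eng)
  have Zmult: "z1 \<in> Z \<Longrightarrow> z2 \<in> Z \<Longrightarrow> z1 \<otimes> z2 \<in> Z" for z1 z2
  proof (rule inZ)
    assume a: "z1 \<in> Z" "z2 \<in> Z"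
    have c1: "z1 \<in> carrier G" "z2 \<in> carrier G" using a ZH Hc by auto
    show "z1 \<otimes> z2 \<in> H" using a ZH HM by auto
    have e1: "z2 \<otimes> g = g \<otimes> z2" "z1 \<otimes> g = g \<otimes> z1" using a Zc gH by auto
    have "z1 \<otimes> z2 \<otimes> g = z1 \<otimes> (g \<otimes> z2)" using c1 g e1(1) m_assoc[of z1 z2 g] by simp
    also have "\<dots> = g \<otimes> (z1 \<otimes> z2)" using c1 g e1(2) m_assoc[of z1 g z2] m_assoc[of g z1 z2] by simp
    finally show "z1 \<otimes> z2 \<otimes> g = g \<otimes> (z1 \<otimes> z2)" .
    have e2: "z2 \<otimes> h = h \<otimes> z2" "z1 \<otimes> h = h \<otimes> z1" using a Zc hH by auto
    have "z1 \<otimes> z2 \<otimes> h = z1 \<otimes> (h \<otimes> z2)" using c1 h e2(1) m_assoc[of z1 z2 h] by simp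
    also have "\<dots> = h \<otimes> (z1 \<otimes> z2)" using c1 h e2(2) m_assoc[of z1 h z2] m_assoc[of h z1 z2] by simp
    finally show "z1 \<otimes> z2 \<otimes> h = h \<otimes> (z1 \<otimes> z2)" .
  qed
  have Zinv: "z \<in> Z \<Longrightarrow> inv z \<in> Z" for z
  proof (rule inZ)
    assume a: "z \<in> Z"
    have c1: "z \<in> carrier G" using a ZH Hc by auto
    show "inv z \<in> H" using a ZH generate_m_inv_closed[OF S] unfolding H_def by blast
    have "g \<otimes> z = z \<otimes> g" using a Zc gH by auto
    then show "inv z \<otimes> g = g \<otimes> inv z" using inv_commute[of z g] c1 g by auto
    have "h \<otimes> z = z \<otimes> h" using a Zc hH by auto
    then show "inv z \<otimes> h = h \<otimes> inv z" using inv_commute[of z h] c1 h by auto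
  qed
  have oneZ: "\<one> \<in> Z" by (rule inZ) (simp_all add: H_def generate.one g h)
  have cZ: "c \<in> Z" by (rule inZ) (use cH H_def g h c RW2 RW3 in auto)
  have ggZ: "g \<otimes> g \<in> Z" by (rule inZ) (use HM gH g h c in \<open>simp_all add: m_assoc RW\<close>)
  have hhZ: "h \<otimes> h \<in> Z" by (rule inZ) (use HM hH g h c in \<open>simp_all add: m_assoc RW\<close>)
  have kkH: "(g \<otimes> h) \<otimes> (g \<otimes> h) \<in> H" using HM gH hH by blast
  have kkZ: "(g \<otimes> h) \<otimes> (g \<otimes> h) \<in> Z" by (rule inZ) (use kkH g h c in \<open>simp_all add: m_assoc RW\<close>)
  have UH: "u \<in> U \<Longrightarrow> u \<in> H" for u unfolding U_def using gH hH HM H_def generate.one by auto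
  have Uc: "u \<in> U \<Longrightarrow> u \<in> carrier G" for u using UH Hc by blast
  have cZZ: "c \<otimes> (h \<otimes> h) \<in> Z" "c \<otimes> (g \<otimes> g) \<in> Z" using Zmult cZ ggZ hhZ by auto
  have tabs: "\<one> \<otimes> \<one> = \<one> \<otimes> \<one>" "\<one> \<otimes> g = \<one> \<otimes> g" "\<one> \<otimes> h = \<one> \<otimes> h"
    "\<one> \<otimes> (g \<otimes> h) = \<one> \<otimes> (g \<otimes> h)"
    "g \<otimes> \<one> = \<one> \<otimes> g" "h \<otimes> \<one> = \<one> \<otimes> h" "(g \<otimes> h) \<otimes> \<one> = \<one> \<otimes> (g \<otimes> h)"
    "g \<otimes> g = (g \<otimes> g) \<otimes> \<one>" "g \<otimes> h = \<one> \<otimes> (g \<otimes> h)" "g \<otimes> (g \<otimes> h) = (g \<otimes> g) \<otimes> h"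
    "h \<otimes> g = c \<otimes> (g \<otimes> h)" "h \<otimes> h = (h \<otimes> h) \<otimes> \<one>" "h \<otimes> (g \<otimes> h) = (c \<otimes> (h \<otimes> h)) \<otimes> g"
    "(g \<otimes> h) \<otimes> g = (c \<otimes> (g \<otimes> g)) \<otimes> h" "(g \<otimes> h) \<otimes> h = (h \<otimes> h) \<otimes> g"
    "(g \<otimes> h) \<otimes> (g \<otimes> h) = ((g \<otimes> h) \<otimes> (g \<otimes> h)) \<otimes> \<one>"
    using g h c by (simp_all add: m_assoc RW)
  have tab: "\<exists>z\<in>Z. \<exists>w\<in>U. u \<otimes> v = z \<otimes> w" if "u \<in> U" "v \<in> U" for u v
    using that tabs oneZ cZ ggZ hhZ kkZ cZZ unfolding U_def
    by (simp only: insert_iff empty_iff) (elim disjE; simp only:; blast)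
  have tab2: "v \<otimes> u = u \<otimes> v \<or> v \<otimes> u = c \<otimes> (u \<otimes> v)" if "u \<in> U" "v \<in> U" for u v
    using that g h c unfolding U_def
    by (simp only: insert_iff empty_iff) (elim disjE; simp add: m_assoc RW)
  have tab3: "u = \<one> \<or> v = \<one> \<or> u \<otimes> v \<in> Z" if "u \<in> U" "v \<in> U" "u \<otimes> v = v \<otimes> u" for u v
    using that g h c ggZ hhZ kkZ unfolding U_def
    by (simp only: insert_iff empty_iff) (elim disjE; simp add: m_assoc RW)
  have bex2: "z \<in> Z \<Longrightarrow> w \<in> U \<Longrightarrow> x = z \<otimes> w \<Longrightarrow> \<exists>z\<in>Z. \<exists>w\<in>U. x = z \<otimes> w" for x z w by blast
  have Zcar: "z \<in> Z \<Longrightarrow> z \<in> carrier G" for z using ZH Hc by blast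
  have mulZ: "(z1 \<otimes> u1) \<otimes> (z2 \<otimes> u2) = (z1 \<otimes> z2) \<otimes> (u1 \<otimes> u2)"
    if "z1 \<in> Z" "z2 \<in> Z" "u1 \<in> H" "u2 \<in> H" for z1 z2 u1 u2
  proof -
    have cc: "z1 \<in> carrier G" "z2 \<in> carrier G" "u1 \<in> carrier G" "u2 \<in> carrier G"
      using that Zcar Hc by auto
    have e: "u1 \<otimes> z2 = z2 \<otimes> u1" using Zc that by auto
    have "(z1 \<otimes> u1) \<otimes> (z2 \<otimes> u2) = z1 \<otimes> ((u1 \<otimes> z2) \<otimes> u2)" using cc by (simp add: m_assoc)
    also have "\<dots> = z1 \<otimes> ((z2 \<otimes> u1) \<otimes> u2)" using e by simp
    also have "\<dots> = (z1 \<otimes> z2) \<otimes> (u1 \<otimes> u2)" using cc by (simp add: m_assoc)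
    finally show ?thesis .
  qed
  have dec: "\<exists>z\<in>Z. \<exists>u\<in>U. x = z \<otimes> u" if "x \<in> H" for x
    using that unfolding H_def
  proof (induction rule: generate.induct)
    case one show ?case by (rule bex2[OF oneZ, of \<one>]) (auto simp: U_def)
  next
    case (incl s) then show ?case using bex2[OF oneZ, of s s] g h by (auto simp: U_def)
  next
    case (inv s)
    then have "s = g \<or> s = h" by auto
    then show ?case
    proof
      assume s: "s = g"
      show ?case by (rule bex2[OF Zinv[OF ggZ], of g]) (use g s in \<open>auto simp: U_def m_assoc inv_mult_group\<close>)
    next
      assume s: "s = h"
      show ?case by (rule bex2[OF Zinv[OF hhZ], of h]) (use h s in \<open>auto simp: U_def m_assoc inv_mult_group\<close>)
    qed
  next
    case (eng a b)
    obtain z1 u1 where 1: "z1 \<in> Z" "u1 \<in> U" "a = z1 \<otimes> u1" using eng by blast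
    obtain z2 u2 where 2: "z2 \<in> Z" "u2 \<in> U" "b = z2 \<otimes> u2" using eng by blast
    obtain z3 w where 3: "z3 \<in> Z" "w \<in> U" "u1 \<otimes> u2 = z3 \<otimes> w" using tab[OF 1(2) 2(2)] by blast
    have "a \<otimes> b = (z1 \<otimes> z2) \<otimes> (z3 \<otimes> w)" using mulZ[OF 1(1) 2(1) UH[OF 1(2)] UH[OF 2(2)]] 1 2 3 by simp
    also have "\<dots> = (z1 \<otimes> z2 \<otimes> z3) \<otimes> w" using 1 2 3 Zcar Uc by (simp add: m_assoc)
    finally show ?case using bex2[OF Zmult[OF Zmult[OF 1(1) 2(1)] 3(1)] 3(2)] by blast
  qed
  have main: "(a \<otimes> b = b \<otimes> a \<longrightarrow> a \<in> Z \<or> b \<in> Z \<or> a \<otimes> b \<in> Z) \<and> (b \<otimes> a = a \<otimes> b \<or> b \<otimes> a = c \<otimes> (a \<otimes> b))"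
    if abH: "a \<in> H" "b \<in> H" for a b
  proof -
    obtain z1 u1 where 1: "z1 \<in> Z" "u1 \<in> U" "a = z1 \<otimes> u1" using dec abH(1) by blast
    obtain z2 u2 where 2: "z2 \<in> Z" "u2 \<in> U" "b = z2 \<otimes> u2" using dec abH(2) by blast
    have zz: "z2 \<otimes> z1 = z1 \<otimes> z2" using Zc 1 2 ZH by auto
    have ab: "a \<otimes> b = (z1 \<otimes> z2) \<otimes> (u1 \<otimes> u2)" using mulZ[OF 1(1) 2(1) UH[OF 1(2)] UH[OF 2(2)]] 1 2 by simp
    have ba: "b \<otimes> a = (z1 \<otimes> z2) \<otimes> (u2 \<otimes> u1)" using mulZ[OF 2(1) 1(1) UH[OF 2(2)] UH[OF 1(2)]] 1 2 zz by simp
    have zc: "z1 \<otimes> z2 \<in> carrier G" "z1 \<otimes> z2 \<in> Z" using Zmult 1 2 Zcar by auto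
    have uc: "u1 \<in> carrier G" "u2 \<in> carrier G" using 1 2 Uc by auto
    have P1: "a \<in> Z \<or> b \<in> Z \<or> a \<otimes> b \<in> Z" if "a \<otimes> b = b \<otimes> a"
    proof -
      have "u1 \<otimes> u2 = u2 \<otimes> u1" using that ab ba zc uc by simp
      then have "u1 = \<one> \<or> u2 = \<one> \<or> u1 \<otimes> u2 \<in> Z" using tab3 1 2 by blast
      then show ?thesis using 1 2 ab zc Zmult Zcar by auto
    qed
    have P2: "b \<otimes> a = a \<otimes> b \<or> b \<otimes> a = c \<otimes> (a \<otimes> b)"
    proof -
      have cz: "c \<otimes> (z1 \<otimes> z2) = (z1 \<otimes> z2) \<otimes> c" using Zc cZ zc ZH by auto
      have "(z1 \<otimes> z2) \<otimes> (c \<otimes> (u1 \<otimes> u2)) = c \<otimes> ((z1 \<otimes> z2) \<otimes> (u1 \<otimes> u2))"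
        using cz zc uc c by (simp add: m_assoc[symmetric])
      then show ?thesis using tab2[OF 1(2) 2(2)] ab ba by auto
    qed
    show ?thesis using P1 P2 by blast
  qed
  have LC: "LC_property G H"
    unfolding LC_property_def
  proof (intro ballI iffI)
    fix a b assume a: "a \<in> H" and b: "b \<in> H"
    show "a \<otimes> b = b \<otimes> a \<Longrightarrow> a \<in> sub_center G H \<or> b \<in> sub_center G H \<or> a \<otimes> b \<in> sub_center G H"
      using main[OF a b] Z_def by blast
    assume "a \<in> sub_center G H \<or> b \<in> sub_center G H \<or> a \<otimes> b \<in> sub_center G H"
    then show "a \<otimes> b = b \<otimes> a"
    proof (elim disjE)
      assume "a \<in> sub_center G H" then show ?thesis using Zc Z_def b by auto
    next
      assume "b \<in> sub_center G H" then show ?thesis using Zc Z_def a by auto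
    next
      assume "a \<otimes> b \<in> sub_center G H"
      then have "(a \<otimes> b) \<otimes> a = a \<otimes> (a \<otimes> b)" using Zc Z_def a by auto
      then show ?thesis using a b Hc by (simp add: m_assoc)
    qed
  qed
  show ?thesis using LC main unfolding H_def by blast
qed

end


lemma (in group) comm_one: "a \<in> carrier G \<Longrightarrow> b \<in> carrier G \<Longrightarrow> a \<otimes> b = b \<otimes> a \<Longrightarrow> grp_comm G a b = \<one>"
  unfolding grp_comm_def by (simp add: m_assoc)

lemma (in group) comm_mul: "a \<in> carrier G \<Longrightarrow> b \<in> carrier G \<Longrightarrow> grp_comm G a b \<otimes> (b \<otimes> a) = a \<otimes> b"
proof -
  assume a: "a \<in> carrier G" and b: "b \<in> carrier G"
  have e: "inv b \<otimes> (b \<otimes> a) = a" using a b by (simp add: m_assoc[symmetric])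
  show ?thesis unfolding grp_comm_def using a b e by (simp add: m_assoc)
qed

lemma char_facts:
  assumes "CHAR('r::comm_ring_1) \<noteq> 2" "r \<noteq> 0" "2 * r = (0::'r)"
  shows "(2::'r) \<noteq> 0" "(3::'r) \<noteq> 0" "(4::'r) = 0 \<Longrightarrow> CHAR('r) = 4"
proof -
  have one: "(1::'r) \<noteq> 0" using assms(2) by (metis mult_1 mult_zero_left)
  have c1: "CHAR('r) \<noteq> 1" using one of_nat_eq_0_iff_char_dvd[of 1, where 'a='r] by auto
  show "(2::'r) \<noteq> 0"
  proof
    assume "(2::'r) = 0"
    then have "CHAR('r) dvd 2" using of_nat_eq_0_iff_char_dvd[of 2, where 'a='r] by simp
    then have "CHAR('r) \<le> 2" "CHAR('r) > 0" using dvd_imp_le by (auto intro: Nat.gr0I)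
    then show False using c1 assms(1) by linarith
  qed
  show "(3::'r) \<noteq> 0"
  proof
    assume "(3::'r) = 0"
    then have "3 * r = 0" by simp
    then have "3 * r - 2 * r = 0" using assms(3) by simp
    then show False using assms(2) by (simp add: algebra_simps)
  qed
  assume "(4::'r) = 0"
  then have d: "CHAR('r) dvd 4" using of_nat_eq_0_iff_char_dvd[of 4, where 'a='r] by simp
  then have "CHAR('r) \<le> 4" "CHAR('r) > 0" using dvd_imp_le by (auto intro: Nat.gr0I)
  moreover have "CHAR('r) \<noteq> 3" using d by auto
  ultimately show "CHAR('r) = 4" using c1 assms(1) by linarith
qed

theorem lemma2p4:
  fixes G :: "'g monoid" and \<phi> :: "'g \<Rightarrow> 'g" and g h :: 'g
  assumes "group G"
    and "CHAR('r::comm_ring_1) \<noteq> 2"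
    and "\<exists>r::'r. r \<noteq> 0 \<and> 2 * r = 0"
    and "group_involution G \<phi>"
    and "\<forall>\<alpha> \<in> (gr_skew G \<phi> :: ('g \<Rightarrow> 'r) set). \<forall>\<beta> \<in> gr_skew G \<phi>. gr_mult G \<alpha> \<beta> = gr_mult G \<beta> \<alpha>"
    and "g \<in> carrier G" and "h \<in> carrier G"
    and "grp_comm G g h \<noteq> \<one>\<^bsub>G\<^esub>"
  shows "(g \<in> fixed_elems G \<phi> \<and> h \<notin> fixed_elems G \<phi> \<longrightarrow>
            g \<otimes>\<^bsub>G\<^esub> h = \<phi> h \<otimes>\<^bsub>G\<^esub> g \<and> h \<otimes>\<^bsub>G\<^esub> g = g \<otimes>\<^bsub>G\<^esub> \<phi> h)
       \<and> (g \<notin> fixed_elems G \<phi> \<and> h \<notin> fixed_elems G \<phi> \<longrightarrow>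
            g \<otimes>\<^bsub>G\<^esub> h \<notin> fixed_elems G \<phi>)
       \<and> (g \<notin> fixed_elems G \<phi> \<and> h \<notin> fixed_elems G \<phi> \<longrightarrow>
            CHAR('r) = 4
            \<and> LC_property G (generate G {g, h})
            \<and> unique_nontrivial_commutator G (generate G {g, h})
            \<and> \<phi> g = grp_comm G g h \<otimes>\<^bsub>G\<^esub> g
            \<and> \<phi> h = grp_comm G g h \<otimes>\<^bsub>G\<^esub> h)
       \<and> (CHAR('r) \<noteq> 4 \<longrightarrow>
            (\<forall>a \<in> generate G (carrier G - fixed_elems G \<phi>).
             \<forall>b \<in> generate G (carrier G - fixed_elems G \<phi>). a \<otimes>\<^bsub>G\<^esub> b = b \<otimes>\<^bsub>G\<^esub> a))"
proof -
  interpret G: group G by fact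
  note inv = assms(4) and comm = assms(5) and g = assms(6) and h = assms(7)
  obtain r :: 'r where r: "r \<noteq> 0" "2 * r = 0" using assms(3) by blast
  note cf = char_facts[OF assms(2) r]
  have gh: "g \<otimes>\<^bsub>G\<^esub> h \<noteq> h \<otimes>\<^bsub>G\<^esub> g" using G.comm_one[OF g h] assms(8) by auto
  have fx: "x \<in> fixed_elems G \<phi> \<longleftrightarrow> \<phi> x = x" if "x \<in> carrier G" for x
    using that unfolding fixed_elems_def by auto
  have P3: "\<phi> x \<otimes>\<^bsub>G\<^esub> \<phi> y = x \<otimes>\<^bsub>G\<^esub> y \<and> y \<otimes>\<^bsub>G\<^esub> \<phi> x = x \<otimes>\<^bsub>G\<^esub> y
      \<and> \<phi> y \<otimes>\<^bsub>G\<^esub> x = x \<otimes>\<^bsub>G\<^esub> y \<and> (4::'r) = 0"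
    if "x \<in> carrier G" "\<phi> x \<noteq> x" "y \<in> carrier G" "\<phi> y \<noteq> y" "x \<otimes>\<^bsub>G\<^esub> y \<noteq> y \<otimes>\<^bsub>G\<^esub> x" for x y
    using G.part3[OF inv comm r cf(1) cf(2) that] .
  have C1: "g \<in> fixed_elems G \<phi> \<and> h \<notin> fixed_elems G \<phi> \<longrightarrow>
            g \<otimes>\<^bsub>G\<^esub> h = \<phi> h \<otimes>\<^bsub>G\<^esub> g \<and> h \<otimes>\<^bsub>G\<^esub> g = g \<otimes>\<^bsub>G\<^esub> \<phi> h"
    using G.part1[OF inv comm r g(1) _ h(1) _ gh] fx g h by auto
  have C2: "g \<notin> fixed_elems G \<phi> \<and> h \<notin> fixed_elems G \<phi> \<longrightarrow> g \<otimes>\<^bsub>G\<^esub> h \<notin> fixed_elems G \<phi>"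
    using G.part2[OF inv comm r g(1) _ h(1) _ gh] fx g h by auto
  have C3: "CHAR('r) = 4
            \<and> LC_property G (generate G {g, h})
            \<and> unique_nontrivial_commutator G (generate G {g, h})
            \<and> \<phi> g = grp_comm G g h \<otimes>\<^bsub>G\<^esub> g
            \<and> \<phi> h = grp_comm G g h \<otimes>\<^bsub>G\<^esub> h"
    if nf: "g \<notin> fixed_elems G \<phi>" "h \<notin> fixed_elems G \<phi>"
  proof -
    have ng: "\<phi> g \<noteq> g" and nh: "\<phi> h \<noteq> h" using nf fx g h by auto
    have g': "\<phi> g \<in> carrier G" and h': "\<phi> h \<in> carrier G" using inv_basic[OF inv g h] inv_basic[OF inv h g] by auto
    from P3[OF g ng h nh gh] have R1: "\<phi> g \<otimes>\<^bsub>G\<^esub> \<phi> h = g \<otimes>\<^bsub>G\<^esub> h" and R2: "h \<otimes>\<^bsub>G\<^esub> \<phi> g = g \<otimes>\<^bsub>G\<^esub> h"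
      and R3: "\<phi> h \<otimes>\<^bsub>G\<^esub> g = g \<otimes>\<^bsub>G\<^esub> h" and four: "(4::'r) = 0" by auto
    from P3[OF h nh g ng gh[symmetric]] have R4: "\<phi> h \<otimes>\<^bsub>G\<^esub> \<phi> g = h \<otimes>\<^bsub>G\<^esub> g" and R5: "g \<otimes>\<^bsub>G\<^esub> \<phi> h = h \<otimes>\<^bsub>G\<^esub> g"
      and R6: "\<phi> g \<otimes>\<^bsub>G\<^esub> h = h \<otimes>\<^bsub>G\<^esub> g" by auto
    define c where "c = grp_comm G g h"
    have c: "c \<in> carrier G" unfolding c_def grp_comm_def using g h by simp
    have E2: "c \<otimes>\<^bsub>G\<^esub> h \<otimes>\<^bsub>G\<^esub> g = g \<otimes>\<^bsub>G\<^esub> h" unfolding c_def grp_comm_def using g h by (simp add: G.m_assoc)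
    have Ph: "\<phi> h = c \<otimes>\<^bsub>G\<^esub> h"
    proof -
      have "\<phi> h \<otimes>\<^bsub>G\<^esub> g = (c \<otimes>\<^bsub>G\<^esub> h) \<otimes>\<^bsub>G\<^esub> g" using R3 E2 by simp
      then show ?thesis using G.r_cancel[of g "\<phi> h" "c \<otimes>\<^bsub>G\<^esub> h"] g h' c h by simp
    qed
    have Pg: "\<phi> g = c \<otimes>\<^bsub>G\<^esub> g"
    proof -
      have "(c \<otimes>\<^bsub>G\<^esub> g) \<otimes>\<^bsub>G\<^esub> \<phi> h = c \<otimes>\<^bsub>G\<^esub> (h \<otimes>\<^bsub>G\<^esub> g)" using R5 c g h' by (simp add: G.m_assoc)
      also have "\<dots> = g \<otimes>\<^bsub>G\<^esub> h" using E2 c g h by (simp add: G.m_assoc)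
      finally have "(c \<otimes>\<^bsub>G\<^esub> g) \<otimes>\<^bsub>G\<^esub> \<phi> h = \<phi> g \<otimes>\<^bsub>G\<^esub> \<phi> h" using R1 by simp
      then show ?thesis using G.r_cancel[of "\<phi> h" "c \<otimes>\<^bsub>G\<^esub> g" "\<phi> g"] g h' c g' by simp
    qed
    have E1: "c \<otimes>\<^bsub>G\<^esub> g \<otimes>\<^bsub>G\<^esub> h = h \<otimes>\<^bsub>G\<^esub> g" using R6 Pg by simp
    have E3: "g \<otimes>\<^bsub>G\<^esub> c \<otimes>\<^bsub>G\<^esub> h = h \<otimes>\<^bsub>G\<^esub> g" using R5 Ph g c h by (simp add: G.m_assoc)
    have E4: "h \<otimes>\<^bsub>G\<^esub> c \<otimes>\<^bsub>G\<^esub> g = g \<otimes>\<^bsub>G\<^esub> h" using R2 Pg g c h by (simp add: G.m_assoc)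
    have gH: "g \<in> generate G {g,h}" and hH: "h \<in> generate G {g,h}" by (auto intro: generate.incl)
    have cH: "c \<in> generate G {g,h}" unfolding c_def grp_comm_def
      by (rule generate.eng[OF generate.eng[OF generate.eng[OF gH hH] generate.inv] generate.inv]) auto
    have cc: "c \<otimes>\<^bsub>G\<^esub> c = \<one>\<^bsub>G\<^esub>"
    proof -
      have "c \<otimes>\<^bsub>G\<^esub> c \<otimes>\<^bsub>G\<^esub> (g \<otimes>\<^bsub>G\<^esub> h) = \<one>\<^bsub>G\<^esub> \<otimes>\<^bsub>G\<^esub> (g \<otimes>\<^bsub>G\<^esub> h)"
        using E1 E2 g h c by (simp add: G.m_assoc)
      then show ?thesis using g h c G.r_cancel[of "g \<otimes>\<^bsub>G\<^esub> h" "c \<otimes>\<^bsub>G\<^esub> c" "\<one>\<^bsub>G\<^esub>"] by simp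
    qed
    have S: "LC_property G (generate G {g,h}) \<and> (\<forall>a\<in>generate G {g,h}. \<forall>b\<in>generate G {g,h}.
        b \<otimes>\<^bsub>G\<^esub> a = a \<otimes>\<^bsub>G\<^esub> b \<or> b \<otimes>\<^bsub>G\<^esub> a = c \<otimes>\<^bsub>G\<^esub> (a \<otimes>\<^bsub>G\<^esub> b))"
      by (rule G.struct[OF g h gh c E1 E2 E3 E4 cH])
    have Hc: "x \<in> generate G {g,h} \<Longrightarrow> x \<in> carrier G" for x using G.generate_in_carrier[of "{g,h}" x] g h by auto
    have U: "unique_nontrivial_commutator G (generate G {g, h})"
      unfolding unique_nontrivial_commutator_def
    proof (rule ex1I[of _ c])
      show "c \<in> {grp_comm G a b |a b. a \<in> generate G {g, h} \<and> b \<in> generate G {g, h}} \<and> c \<noteq> \<one>\<^bsub>G\<^esub>"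
        using gH hH assms(8) unfolding c_def by blast
      fix d assume "d \<in> {grp_comm G a b |a b. a \<in> generate G {g, h} \<and> b \<in> generate G {g, h}} \<and> d \<noteq> \<one>\<^bsub>G\<^esub>"
      then obtain a b where ab: "a \<in> generate G {g,h}" "b \<in> generate G {g,h}" "d = grp_comm G a b" "d \<noteq> \<one>\<^bsub>G\<^esub>" by blast
      have ac: "a \<in> carrier G" "b \<in> carrier G" using ab Hc by auto
      have dc: "d \<in> carrier G" using ab ac unfolding grp_comm_def by simp
      have "b \<otimes>\<^bsub>G\<^esub> a \<noteq> a \<otimes>\<^bsub>G\<^esub> b" using G.comm_one[OF ac] ab by auto
      then have ba: "b \<otimes>\<^bsub>G\<^esub> a = c \<otimes>\<^bsub>G\<^esub> (a \<otimes>\<^bsub>G\<^esub> b)" using S ab by blast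
      have "(d \<otimes>\<^bsub>G\<^esub> c) \<otimes>\<^bsub>G\<^esub> (a \<otimes>\<^bsub>G\<^esub> b) = \<one>\<^bsub>G\<^esub> \<otimes>\<^bsub>G\<^esub> (a \<otimes>\<^bsub>G\<^esub> b)"
        using G.comm_mul[OF ac] ab(3) ba dc c ac by (simp add: G.m_assoc)
      then have "d \<otimes>\<^bsub>G\<^esub> c = \<one>\<^bsub>G\<^esub>" using G.r_cancel[of "a \<otimes>\<^bsub>G\<^esub> b" "d \<otimes>\<^bsub>G\<^esub> c" "\<one>\<^bsub>G\<^esub>"] dc c ac by simp
      then have "d \<otimes>\<^bsub>G\<^esub> c = c \<otimes>\<^bsub>G\<^esub> c" using cc by simp
      then show "d = c" using G.r_cancel[of c d c] dc c by simp
    qed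
    show ?thesis using cf(3)[OF four] S U Pg Ph c_def by blast
  qed
  have C4: "CHAR('r) \<noteq> 4 \<longrightarrow>
            (\<forall>a \<in> generate G (carrier G - fixed_elems G \<phi>).
             \<forall>b \<in> generate G (carrier G - fixed_elems G \<phi>). a \<otimes>\<^bsub>G\<^esub> b = b \<otimes>\<^bsub>G\<^esub> a)"
  proof (intro impI ballI)
    fix a b assume n4: "CHAR('r) \<noteq> 4" and ab: "a \<in> generate G (carrier G - fixed_elems G \<phi>)" "b \<in> generate G (carrier G - fixed_elems G \<phi>)"
    have pw: "\<forall>x\<in>carrier G - fixed_elems G \<phi>. \<forall>y\<in>carrier G - fixed_elems G \<phi>. x \<otimes>\<^bsub>G\<^esub> y = y \<otimes>\<^bsub>G\<^esub> x"
    proof (intro ballI, rule ccontr)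
      fix x y assume x: "x \<in> carrier G - fixed_elems G \<phi>" and y: "y \<in> carrier G - fixed_elems G \<phi>"
        and ne: "x \<otimes>\<^bsub>G\<^esub> y \<noteq> y \<otimes>\<^bsub>G\<^esub> x"
      have "(4::'r) = 0" using P3[of x y] x y ne fx by auto
      then show False using cf(3) n4 by auto
    qed
    show "a \<otimes>\<^bsub>G\<^esub> b = b \<otimes>\<^bsub>G\<^esub> a" by (rule G.gen_abelian[OF _ pw ab]) auto
  qed
  show ?thesis using C1 C2 C3 C4 by blast
qed


end
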